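(* Consider the distributed associative memory setting described in the context, with agents running the DAM-TOGD update, and suppose that for each agent $n$ the learning rate sequence $(\eta_{n,t})_{t\ge 1}$ is positive and non-increasing in $t$. Then the regret satisfies $$\mathrm{Reg}(T) \le \sum_{n \in \mathcal{N}} \left( Q_n \sum_{t=\tau_{n,\min}+1}^{T+\tau_{n,\max}} \eta_{n,t} + P_n\, \eta_{n,\tau_{n,\min}+1} + H_n + C_n \right),$$ where $$Q_n = \frac{K_n}{2}\sum_{m\in\mathcal{W}_n} L_m + |\mathcal{W}_n|\, K_n^2 \sum_{m\in\mathcal{W}_n}\tau_{n,m},\qquad P_n = |\mathcal{W}_n|^2 K_n^2\, \tau_{n,\max}^2,$$ $$H_n = \sum_{t=\tau_{n,\min}+1}^{T+\tau_{n,\max}} \frac{\|\mathbf{X}_{n,t}-\mathbf{U}_n^*\|^2 - \|\mathbf{X}_{n,t+1}-\mathbf{U}_n^*\|^2}{2\eta_{n,t}},\qquad C_n = \frac{\Delta\tau_n}{2}\left( K_n\sum_{m\in\mathcal{W}_n} L_m + |\mathcal{W}_n|\, B^2\right),$$ with $K_n = \max_{m\in\mathcal{W}_n} w_{n,m}L_m$, $\tau_{n,\min}=\min_{m\in\mathcal{W}_n}\tau_{n,m}$, $\tau_{n,\max}=\max_{m\in\mathcal{W}_n}\tau_{n,m}$, $\Delta\tau_n=\tau_{n,\max}-\tau_{n,\min}$, and $|\mathcal{W}_n|$ the cardinality of $\mathcal{W}_n$.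
   Context: There are $N$ agents indexed by $\mathcal{N}=\{1,\dots,N\}$. At each time $t=1,2,\dots$, agent $m$ has a convex loss function $f_{m,t}:\mathcal{X}\to\mathbb{R}$ (e.g. built from a key–value pair $(\mathbf{k}_{m,t},\mathbf{v}_{m,t})$), which only agent $m$ can evaluate. The feasible set $\mathcal{X}$ (a set of matrices) is closed, convex and bounded with diameter $B$, and $\|\nabla f_{m,t}(\mathbf{X})\|_F\le L_m$ for all $m$, $t$ and $\mathbf{X}\in\mathcal{X}$, with finite $L_m>0$. Norms $\|\cdot\|$ are Frobenius norms and $\Pi_{\mathcal{X}}$ denotes Euclidean (Frobenius) projection onto $\mathcal{X}$. A row-stochastic matrix $\mathbf{W}$ with entries $w_{n,m}\in[0,1]$, $\sum_m w_{n,m}=1$, is given; $\mathcal{W}_n=\{m\in\mathcal{N}: w_{n,m}>0\}$. Agent $n$ maintains iterates $\mathbf{X}_{n,t}\in\mathcal{X}$ and its cumulative loss is $\mathcal{L}_n^T(\mathbf{X}_n^T)=\sum_{t=1}^T\sum_{m\in\mathcal{W}_n} w_{n,m} f_{m,t}(\mathbf{X}_{n,t})$. Let $\mathbf{U}_n^*\in\arg\min_{\mathbf{U}\in\mathcal{X}}\sum_{t=1}^T\sum_{m\in\mathcal{W}_n} w_{n,m}f_{m,t}(\mathbf{U})$, and define the regret $\mathrm{Reg}(T)=\sum_{n\in\mathcal{N}}\big(\mathcal{L}_n^T(\mathbf{X}_n^T)-\mathcal{L}_n^T(\mathbf{U}_n^* )\big)$ (with $\mathcal{L}_n^T(\mathbf{U}_n^*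 )$ meaning the constant sequence $\mathbf{U}_n^*$). Agents communicate over a connected undirected graph $\mathcal{G}=(\mathcal{N},\mathcal{E})$. For each $n$, a Steiner tree $\mathcal{T}_n$ in $\mathcal{G}$ rooted at $n$ and containing paths from $n$ to every agent of $\mathcal{W}_n$ is fixed; $\tilde\tau_{n,m}$ is the number of edges on the path in $\mathcal{T}_n$ from $n$ to $m$ (so $\tilde\tau_{n,n}=0$), and $\tau_{n,m}=2\tilde\tau_{n,m}$ is the round-trip delay: each message takes one time step per edge, so agent $n$ obtains $\nabla f_{m,s}(\mathbf{X}_{n,s})$ at time $s+\tau_{n,m}$. DAM-TOGD: starting from an initial point $\mathbf{X}_{n,1}\in\mathcal{X}$, each agent $n$ updates, for $t\ge1$, $$\mathbf{X}_{n,t+1}=\Pi_{\mathcal{X}}\Big[\mathbf{X}_{n,t}-\eta_{n,t}\sum_{m\in\mathcal{W}_n} w_{n,m}\nabla f_{m,t-\tau_{n,m}}(\mathbf{X}_{n,t-\tau_{n,m}})\,\mathbb{1}_{\{t>\tau_{n,m}\}}\Big],$$ where $\eta_{n,t}>0$ is the learning rate (iterates are defined by this recursion also for $t>T$). *)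

theory Defs
  imports "HOL-Analysis.Analysis"
begin

text \<open>Matrices are elements of real^'c^'r; the HOL-Analysis norm on this type is the
Frobenius norm and inner is the Frobenius inner product.\<close>

fun is_path :: "('a \<Rightarrow> 'a \<Rightarrow> bool) \<Rightarrow> 'a list \<Rightarrow> bool" where
  "is_path E [] = False"
| "is_path E [x] = True"
| "is_path E (x # y # xs) = (E x y \<and> is_path E (y # xs))"

definition Wset :: "('ag \<Rightarrow> 'ag \<Rightarrow> real) \<Rightarrow> 'ag \<Rightarrow> 'ag set" where
  "Wset w n = {m. w n m > 0}"

definition dam_dir ::
  "('ag \<Rightarrow> 'ag \<Rightarrow> real) \<Rightarrow> ('ag \<Rightarrow> 'ag \<Rightarrow> nat) \<Rightarrow> ('ag \<Rightarrow> nat \<Rightarrow> 'x \<Rightarrow> 'x::real_vector)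
    \<Rightarrow> ('ag \<Rightarrow> nat \<Rightarrow> 'x) \<Rightarrow> 'ag \<Rightarrow> nat \<Rightarrow> 'x" where
  "dam_dir w \<tau> grad X n t =
     (\<Sum>m\<in>Wset w n. w n m *\<^sub>R (if t > \<tau> n m then grad m (t - \<tau> n m) (X n (t - \<tau> n m)) else 0))"

definition regret ::
  "('ag::finite \<Rightarrow> 'ag \<Rightarrow> real) \<Rightarrow> ('ag \<Rightarrow> nat \<Rightarrow> 'x \<Rightarrow> real) \<Rightarrow> ('ag \<Rightarrow> nat \<Rightarrow> 'x)
    \<Rightarrow> ('ag \<Rightarrow> 'x) \<Rightarrow> nat \<Rightarrow> real" where
  "regret w f X U T = (\<Sum>n\<in>UNIV.
      (\<Sum>t=1..T. \<Sum>m\<in>Wset w n. w n m * f m t (X n t))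
    - (\<Sum>t=1..T. \<Sum>m\<in>Wset w n. w n m * f m t (U n)))"

definition Kc :: "('ag \<Rightarrow> 'ag \<Rightarrow> real) \<Rightarrow> ('ag \<Rightarrow> real) \<Rightarrow> 'ag \<Rightarrow> real" where
  "Kc w L n = Max ((\<lambda>m. w n m * L m) ` Wset w n)"

definition tmin :: "('ag \<Rightarrow> 'ag \<Rightarrow> real) \<Rightarrow> ('ag \<Rightarrow> 'ag \<Rightarrow> nat) \<Rightarrow> 'ag \<Rightarrow> nat" where
  "tmin w \<tau> n = Min (\<tau> n ` Wset w n)"

definition tmax :: "('ag \<Rightarrow> 'ag \<Rightarrow> real) \<Rightarrow> ('ag \<Rightarrow> 'ag \<Rightarrow> nat) \<Rightarrow> 'ag \<Rightarrow> nat" where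
  "tmax w \<tau> n = Max (\<tau> n ` Wset w n)"

definition Qc :: "('ag \<Rightarrow> 'ag \<Rightarrow> real) \<Rightarrow> ('ag \<Rightarrow> real) \<Rightarrow> ('ag \<Rightarrow> 'ag \<Rightarrow> nat) \<Rightarrow> 'ag \<Rightarrow> real" where
  "Qc w L \<tau> n = Kc w L n / 2 * (\<Sum>m\<in>Wset w n. L m)
     + real (card (Wset w n)) * (Kc w L n)\<^sup>2 * (\<Sum>m\<in>Wset w n. real (\<tau> n m))"

definition Pc :: "('ag \<Rightarrow> 'ag \<Rightarrow> real) \<Rightarrow> ('ag \<Rightarrow> real) \<Rightarrow> ('ag \<Rightarrow> 'ag \<Rightarrow> nat) \<Rightarrow> 'ag \<Rightarrow> real" where
  "Pc w L \<tau> n = real (card (Wset w n))^2 * (Kc w L n)\<^sup>2 * real (tmax w \<tau> n)^2"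

definition Hc :: "('ag \<Rightarrow> 'ag \<Rightarrow> real) \<Rightarrow> ('ag \<Rightarrow> 'ag \<Rightarrow> nat) \<Rightarrow> ('ag \<Rightarrow> nat \<Rightarrow> real)
    \<Rightarrow> ('ag \<Rightarrow> nat \<Rightarrow> 'x::real_normed_vector) \<Rightarrow> ('ag \<Rightarrow> 'x) \<Rightarrow> nat \<Rightarrow> 'ag \<Rightarrow> real" where
  "Hc w \<tau> \<eta> X U T n = (\<Sum>t = tmin w \<tau> n + 1 .. T + tmax w \<tau> n.
      ((norm (X n t - U n))\<^sup>2 - (norm (X n (t + 1) - U n))\<^sup>2) / (2 * \<eta> n t))"

definition Cc :: "('ag \<Rightarrow> 'ag \<Rightarrow> real) \<Rightarrow> ('ag \<Rightarrow> real) \<Rightarrow> ('ag \<Rightarrow> 'ag \<Rightarrow> nat) \<Rightarrow> real \<Rightarrow> 'ag \<Rightarrow> real" where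
  "Cc w L \<tau> B n = (real (tmax w \<tau> n) - real (tmin w \<tau> n)) / 2 *
      (Kc w L n * (\<Sum>m\<in>Wset w n. L m) + real (card (Wset w n)) * B\<^sup>2)"

end

theory Submission
  imports Defs
begin

lemma grad_ineq:
  fixes f :: "'a::real_inner \<Rightarrow> real"
  assumes cv: "convex_on S f" and x: "x \<in> S" and y: "y \<in> S"
    and d: "(f has_derivative (\<lambda>h. g \<bullet> h)) (at x)"
  shows "f x - f y \<le> g \<bullet> (x - y)"
proof -
  define \<phi> where "\<phi> s = f (x + s *\<^sub>R (y - x))" for s :: real
  have l: "((\<lambda>s. x + s *\<^sub>R (y - x)) has_derivative (\<lambda>h. h *\<^sub>R (y - x))) (at 0 within {0<..})"
    by (auto intro!: derivative_eq_intros)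
  have d0: "(f has_derivative (\<lambda>h. g \<bullet> h)) (at (x + 0 *\<^sub>R (y - x)) within ((\<lambda>s. x + s *\<^sub>R (y - x)) ` {0<..}))"
    using d by (simp add: has_derivative_at_withinI)
  have "(\<phi> has_derivative (\<lambda>h. g \<bullet> (h *\<^sub>R (y - x)))) (at 0 within {0<..})"
    unfolding \<phi>_def using has_derivative_in_compose[OF l d0] by (simp add: o_def)
  then have "(\<phi> has_field_derivative (g \<bullet> (y - x))) (at 0 within {0<..})"
    by (simp add: has_field_derivative_def mult.commute[of _ "g \<bullet> (y - x)"])
  then have lim: "((\<lambda>s. (\<phi> s - \<phi> 0) / (s - 0)) \<longlongrightarrow> g \<bullet> (y - x)) (at_right 0)"
    by (simp add: has_field_derivative_iff)
  have ev: "eventually (\<lambda>s. (\<phi> s - \<phi> 0) / (s - 0) \<le> f y - f x) (at_right (0::real))"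
    using eventually_at_right_real[of 0 1, OF zero_less_one]
  proof (rule eventually_mono)
    fix s :: real assume s: "s \<in> {0<..<1}"
    have "x + s *\<^sub>R (y - x) = (1 - s) *\<^sub>R x + s *\<^sub>R y" by (simp add: algebra_simps)
    then have "\<phi> s \<le> (1 - s) * f x + s * f y"
      unfolding \<phi>_def using convex_onD[OF cv, of s x y] s x y by auto
    then have "\<phi> s - \<phi> 0 \<le> s * (f y - f x)" by (simp add: \<phi>_def algebra_simps)
    then show "(\<phi> s - \<phi> 0) / (s - 0) \<le> f y - f x" using s by (simp add: divide_le_eq mult.commute)
  qed
  have "g \<bullet> (y - x) \<le> f y - f x"
    using tendsto_upperbound[OF lim ev] by simp
  then show ?thesis by (simp add: inner_diff_right)
qed

lemma tele_norm:
  fixes Y :: "nat \<Rightarrow> 'x::real_normed_vector"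
  shows "norm (Y p - Y (p + k)) \<le> (\<Sum>j<k. norm (Y (p + j + 1) - Y (p + j)))"
proof (induction k)
  case 0 then show ?case by simp
next
  case (Suc k)
  have "norm (Y p - Y (p + Suc k)) \<le> norm (Y p - Y (p + k)) + norm (Y (p + k + 1) - Y (p + k))"
    using norm_triangle_ineq4[of "Y p - Y (p + k)" "Y (p + k + 1) - Y (p + k)"]
    by (simp add: algebra_simps)
  then show ?case using Suc by simp
qed

lemma jensen_sq:
  fixes a L :: "'ag \<Rightarrow> real"
  assumes "\<And>m. m \<in> W \<Longrightarrow> 0 \<le> a m" and "(\<Sum>m\<in>W. a m) = 1"
  shows "(\<Sum>m\<in>W. a m * L m)\<^sup>2 \<le> (\<Sum>m\<in>W. a m * (L m)\<^sup>2)"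
proof -
  define \<mu> where "\<mu> = (\<Sum>m\<in>W. a m * L m)"
  have "0 \<le> (\<Sum>m\<in>W. a m * (L m - \<mu>)\<^sup>2)"
    using assms(1) by (intro sum_nonneg) simp
  also have "\<dots> = (\<Sum>m\<in>W. a m * (L m)\<^sup>2) - 2 * \<mu> * (\<Sum>m\<in>W. a m * L m) + \<mu>\<^sup>2 * (\<Sum>m\<in>W. a m)"
    by (simp add: power2_diff algebra_simps sum.distrib sum_subtractf sum_distrib_left sum_distrib_right)
  also have "\<dots> = (\<Sum>m\<in>W. a m * (L m)\<^sup>2) - \<mu>\<^sup>2"
    using assms(2) by (simp add: \<mu>_def power2_eq_square)
  finally show ?thesis by (simp add: \<mu>_def)
qed
lemma sq_expand:
  "(norm (y - e *\<^sub>R d - (v::'x::real_inner)))\<^sup>2 = (norm (y - v))\<^sup>2 - 2 * e * (d \<bullet> (y - v)) + e\<^sup>2 * (norm d)\<^sup>2"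
proof -
  have eq: "y - e *\<^sub>R d - v = (y - v) - e *\<^sub>R d" by (simp add: algebra_simps)
  have "(norm (y - e *\<^sub>R d - v))\<^sup>2 = (norm ((y - v) - e *\<^sub>R d))\<^sup>2" by (simp only: eq)
  also have "\<dots> = (norm (y - v))\<^sup>2 - 2 * ((y - v) \<bullet> (e *\<^sub>R d)) + (norm (e *\<^sub>R d))\<^sup>2"
    using dot_norm_neg[of "y - v" "e *\<^sub>R d"] by (simp add: field_simps)
  also have "\<dots> = (norm (y - v))\<^sup>2 - 2 * e * (d \<bullet> (y - v)) + e\<^sup>2 * (norm d)\<^sup>2"
    by (simp add: inner_commute power_mult_distrib)
  finally show ?thesis .
qed

lemma agent_bound:
  fixes W :: "'ag set" and a L :: "'ag \<Rightarrow> real" and \<tau> :: "'ag \<Rightarrow> nat"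
    and G :: "'ag \<Rightarrow> nat \<Rightarrow> 'x::real_inner" and Y :: "nat \<Rightarrow> 'x" and V :: 'x
    and \<eta> :: "nat \<Rightarrow> real" and d :: "nat \<Rightarrow> 'x"
  assumes W: "finite W" "W \<noteq> {}"
    and a01: "\<And>m. m \<in> W \<Longrightarrow> 0 \<le> a m \<and> a m \<le> 1"
    and asum: "(\<Sum>m\<in>W. a m) = 1"
    and K_def: "K = Max ((\<lambda>m. a m * L m) ` W)"
    and tmn_def: "tmn = Min (\<tau> ` W)" and tmx_def: "tmx = Max (\<tau> ` W)"
    and Lpos: "\<And>m. m \<in> W \<Longrightarrow> 0 \<le> L m"
    and Gb: "\<And>m t. m \<in> W \<Longrightarrow> 1 \<le> t \<Longrightarrow> norm (G m t) \<le> L m"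
    and d_def: "\<And>s. d s = (\<Sum>m\<in>W. a m *\<^sub>R (if \<tau> m < s then G m (s - \<tau> m) else 0))"
    and YB: "\<And>t. 1 \<le> t \<Longrightarrow> norm (Y t - V) \<le> B"
    and step1: "\<And>t. 1 \<le> t \<Longrightarrow> norm (Y (t + 1) - V) \<le> norm (Y t - \<eta> t *\<^sub>R d t - V)"
    and step2: "\<And>t. 1 \<le> t \<Longrightarrow> norm (Y (t + 1) - Y t) \<le> \<eta> t * norm (d t)"
    and eta_pos: "\<And>t. 1 \<le> t \<Longrightarrow> 0 < \<eta> t"
  shows "(\<Sum>t=1..T. \<Sum>m\<in>W. a m * (G m t \<bullet> (Y t - V))) \<le>
     (K / 2 * (\<Sum>m\<in>W. L m) + real (card W) * K\<^sup>2 * (\<Sum>m\<in>W. real (\<tau> m))) * (\<Sum>t = tmn + 1 .. T + tmx. \<eta> t)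
     + (\<Sum>t = tmn + 1 .. T + tmx. ((norm (Y t - V))\<^sup>2 - (norm (Y (t + 1) - V))\<^sup>2) / (2 * \<eta> t))
     + (real tmx - real tmn) / 2 * (K * (\<Sum>m\<in>W. L m) + real (card W) * B\<^sup>2)"
proof -
  define I where "I = {tmn + 1 .. T + tmx}"
  define SL where "SL = (\<Sum>m\<in>W. L m)"
  define SE where "SE = (\<Sum>t\<in>I. \<eta> t)"
  have tmn_le: "\<And>m. m \<in> W \<Longrightarrow> tmn \<le> \<tau> m" using W by (simp add: tmn_def)
  have tmx_ge: "\<And>m. m \<in> W \<Longrightarrow> \<tau> m \<le> tmx" using W by (simp add: tmx_def)
  have aL_K: "\<And>m. m \<in> W \<Longrightarrow> a m * L m \<le> K" using W by (simp add: K_def)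
  have aL0: "\<And>m. m \<in> W \<Longrightarrow> 0 \<le> a m * L m" using a01 Lpos by simp
  have K0: "0 \<le> K" using W aL_K aL0 by (meson all_not_in_conv order_trans)
  have B0: "0 \<le> B" using YB[of 1] norm_ge_zero[of "Y 1 - V"] by linarith
  have etaI: "\<And>t. t \<in> I \<Longrightarrow> 0 < \<eta> t" unfolding I_def using eta_pos by auto
  have SE0: "0 \<le> SE" unfolding SE_def using etaI by (intro sum_nonneg) (auto intro: less_imp_le)
  have SL0: "0 \<le> SL" unfolding SL_def using Lpos by (intro sum_nonneg) auto
  have dn1: "norm (d s) \<le> (\<Sum>m\<in>W. a m * L m)" for s
  proof -
    have "norm (d s) \<le> (\<Sum>m\<in>W. norm (a m *\<^sub>R (if \<tau> m < s then G m (s - \<tau> m) else 0)))"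
      unfolding d_def by (rule norm_sum)
    also have "\<dots> \<le> (\<Sum>m\<in>W. a m * L m)"
    proof (rule sum_mono)
      fix m assume m: "m \<in> W"
      show "norm (a m *\<^sub>R (if \<tau> m < s then G m (s - \<tau> m) else 0)) \<le> a m * L m"
        using a01[OF m] Gb[OF m, of "s - \<tau> m"] aL0[OF m]
        by (auto intro: mult_left_mono)
    qed
    finally show ?thesis .
  qed
  have sumaL: "(\<Sum>m\<in>W. a m * L m) \<le> real (card W) * K"
    using aL_K by (rule sum_bounded_above)
  have dWK: "norm (d s) \<le> (if tmn < s then real (card W) * K else 0)" for s
  proof (cases "tmn < s")
    case True then show ?thesis using dn1[of s] sumaL by simp
  next
    case False then have "d s = 0" unfolding d_def using tmn_le by (intro sum.neutral) (auto dest!: tmn_le)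
    then show ?thesis using False by simp
  qed
  have dsq: "(norm (d s))\<^sup>2 \<le> K * SL" for s
  proof -
    have "(norm (d s))\<^sup>2 \<le> (\<Sum>m\<in>W. a m * L m)\<^sup>2"
      using dn1[of s] by (intro power_mono) auto
    also have "\<dots> \<le> (\<Sum>m\<in>W. a m * (L m)\<^sup>2)"
      using a01 asum by (intro jensen_sq) auto
    also have "\<dots> \<le> (\<Sum>m\<in>W. K * L m)"
    proof (rule sum_mono)
      fix m assume m: "m \<in> W"
      have "(a m * L m) * L m \<le> K * L m" using aL_K[OF m] Lpos[OF m] by (rule mult_right_mono)
      then show "a m * (L m)\<^sup>2 \<le> K * L m" by (simp add: power2_eq_square mult.assoc)
    qed
    also have "\<dots> = K * SL" by (simp add: SL_def sum_distrib_left)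
    finally show ?thesis .
  qed
  have F3: "d s \<bullet> (Y s - V) \<le> ((norm (Y s - V))\<^sup>2 - (norm (Y (s + 1) - V))\<^sup>2) / (2 * \<eta> s) + \<eta> s * (K * SL) / 2"
    if s1: "1 \<le> s" for s
  proof -
    have ep: "0 < \<eta> s" using eta_pos s1 .
    have e1: "(norm (Y s - \<eta> s *\<^sub>R d s - V))\<^sup>2 = (norm (Y s - V))\<^sup>2 - 2 * \<eta> s * (d s \<bullet> (Y s - V)) + (\<eta> s)\<^sup>2 * (norm (d s))\<^sup>2"
      by (rule sq_expand)
    have e2: "(norm (Y (s + 1) - V))\<^sup>2 \<le> (norm (Y s - \<eta> s *\<^sub>R d s - V))\<^sup>2"
      using step1[OF s1] by (simp add: power_mono)
    have e3: "(\<eta> s)\<^sup>2 * (norm (d s))\<^sup>2 \<le> (\<eta> s)\<^sup>2 * (K * SL)" by (rule mult_left_mono[OF dsq]) simp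
    have "2 * \<eta> s * (d s \<bullet> (Y s - V)) \<le> (norm (Y s - V))\<^sup>2 - (norm (Y (s + 1) - V))\<^sup>2 + (\<eta> s)\<^sup>2 * (K * SL)"
      using e1 e2 e3 by linarith
    then have "d s \<bullet> (Y s - V) \<le> ((norm (Y s - V))\<^sup>2 - (norm (Y (s + 1) - V))\<^sup>2 + (\<eta> s)\<^sup>2 * (K * SL)) / (2 * \<eta> s)"
      using ep by (subst pos_le_divide_eq) (auto simp: ac_simps)
    also have "\<dots> = ((norm (Y s - V))\<^sup>2 - (norm (Y (s + 1) - V))\<^sup>2) / (2 * \<eta> s) + \<eta> s * (K * SL) / 2"
      using ep by (simp add: add_divide_distrib power2_eq_square)
    finally show ?thesis .
  qed
  define h where "h r = (if tmn < r then \<eta> r else 0)" for r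
  define CK where "CK = real (card W) * K"
  have CK0: "0 \<le> CK" unfolding CK_def using K0 by simp
  have stepY: "norm (Y (r + 1) - Y r) \<le> CK * h r" if r1: "1 \<le> r" for r
  proof -
    have "norm (Y (r + 1) - Y r) \<le> \<eta> r * norm (d r)" using step2[OF r1] .
    also have "\<dots> \<le> \<eta> r * (if tmn < r then CK else 0)"
      using dWK[of r] eta_pos[OF r1] unfolding CK_def by (intro mult_left_mono) auto
    also have "\<dots> = CK * h r" by (simp add: h_def)
    finally show ?thesis .
  qed
  have teleY: "norm (Y p - Y (p + k)) \<le> CK * (\<Sum>j<k. h (p + j))" if p1: "1 \<le> p" for p k
  proof -
    have "norm (Y p - Y (p + k)) \<le> (\<Sum>j<k. norm (Y (p + j + 1) - Y (p + j)))" by (rule tele_norm)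
    also have "\<dots> \<le> (\<Sum>j<k. CK * h (p + j))"
      using p1 by (intro sum_mono stepY) simp
    also have "\<dots> = CK * (\<Sum>j<k. h (p + j))" by (simp add: sum_distrib_left)
    finally show ?thesis .
  qed
  have hsum: "(\<Sum>t=1..T. h (t + j)) \<le> SE" if j: "j < tmx" for j
  proof -
    have "(\<Sum>t=1..T. h (t + j)) \<le> (\<Sum>t=1..T. if t + j \<in> I then \<eta> (t + j) else 0)"
    proof (rule sum_mono)
      fix t assume t: "t \<in> {1..T}"
      show "h (t + j) \<le> (if t + j \<in> I then \<eta> (t + j) else 0)"
        using t j by (auto simp: h_def I_def)
    qed
    also have "\<dots> = (\<Sum>r\<in>(\<lambda>t. t + j) ` {1..T}. if r \<in> I then \<eta> r else 0)"
      by (subst sum.reindex) (auto simp: inj_on_def)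
    also have "\<dots> = (\<Sum>r\<in>((\<lambda>t. t + j) ` {1..T}) \<inter> I. \<eta> r)"
      by (rule sum.inter_restrict[symmetric]) simp
    also have "\<dots> \<le> SE" unfolding SE_def
      using etaI by (intro sum_mono2) (auto simp: I_def intro: less_imp_le)
    finally show ?thesis .
  qed
  have h0: "0 \<le> h r" for r using eta_pos by (simp add: h_def less_imp_le)
  have P2: "(\<Sum>t=1..T. a m * (G m t \<bullet> (Y t - Y (t + \<tau> m)))) \<le> real (card W) * K\<^sup>2 * real (\<tau> m) * SE"
    if m: "m \<in> W" for m
  proof -
    have "(\<Sum>t=1..T. a m * (G m t \<bullet> (Y t - Y (t + \<tau> m)))) \<le> (\<Sum>t=1..T. K * (CK * (\<Sum>j<\<tau> m. h (t + j))))"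
    proof (rule sum_mono)
      fix t assume t: "t \<in> {1..T}"
      then have t1: "1 \<le> t" by simp
      have "a m * (G m t \<bullet> (Y t - Y (t + \<tau> m))) \<le> a m * (norm (G m t) * norm (Y t - Y (t + \<tau> m)))"
        using a01[OF m] by (intro mult_left_mono) (auto intro: norm_cauchy_schwarz)
      also have "\<dots> \<le> a m * (L m * norm (Y t - Y (t + \<tau> m)))"
        using a01[OF m] Gb[OF m t1] by (intro mult_left_mono mult_right_mono) auto
      also have "\<dots> = (a m * L m) * norm (Y t - Y (t + \<tau> m))" by simp
      also have "\<dots> \<le> K * norm (Y t - Y (t + \<tau> m))"
        using aL_K[OF m] by (intro mult_right_mono) auto
      also have "\<dots> \<le> K * (CK * (\<Sum>j<\<tau> m. h (t + j)))"
        using teleY[OF t1, of "\<tau> m"] K0 by (intro mult_left_mono) auto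
      finally show "a m * (G m t \<bullet> (Y t - Y (t + \<tau> m))) \<le> K * (CK * (\<Sum>j<\<tau> m. h (t + j)))" .
    qed
    also have "\<dots> = K * CK * (\<Sum>j<\<tau> m. \<Sum>t=1..T. h (t + j))"
      by (simp add: sum_distrib_left mult.assoc) (rule sum.swap)
    also have "\<dots> \<le> K * CK * (\<Sum>j<\<tau> m. SE)"
      using tmx_ge[OF m] K0 CK0 by (intro mult_left_mono sum_mono hsum) auto
    also have "\<dots> = real (card W) * K\<^sup>2 * real (\<tau> m) * SE"
      by (simp add: CK_def power2_eq_square)
    finally show ?thesis .
  qed
  define D where "D = real tmx - real tmn"
  have P1: "(\<Sum>t=1..T. a m * (G m t \<bullet> (Y (t + \<tau> m) - V))) \<le>
      (\<Sum>s\<in>I. a m * ((if \<tau> m < s then G m (s - \<tau> m) else 0) \<bullet> (Y s - V))) + D * (a m * L m * B)"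
    if m: "m \<in> W" for m
  proof -
    define e where "e s = (if \<tau> m < s \<and> s \<le> T + \<tau> m then a m * (G m (s - \<tau> m) \<bullet> (Y s - V)) else 0)" for s
    have fin: "finite I" by (simp add: I_def)
    have setq: "{s \<in> I. \<tau> m < s \<and> s \<le> T + \<tau> m} = {1 + \<tau> m .. T + \<tau> m}"
      using tmn_le[OF m] tmx_ge[OF m] by (auto simp: I_def)
    have "(\<Sum>s\<in>I. e s) = (\<Sum>s\<in>{s \<in> I. \<tau> m < s \<and> s \<le> T + \<tau> m}. a m * (G m (s - \<tau> m) \<bullet> (Y s - V)))"
      unfolding e_def by (rule sum.inter_filter[OF fin, symmetric])
    also have "\<dots> = (\<Sum>s\<in>{1 + \<tau> m .. T + \<tau> m}. a m * (G m (s - \<tau> m) \<bullet> (Y s - V)))"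
      by (simp only: setq)
    also have "\<dots> = (\<Sum>t=1..T. a m * (G m t \<bullet> (Y (t + \<tau> m) - V)))"
      by (simp only: sum.shift_bounds_cl_nat_ivl) simp
    finally have eq1: "(\<Sum>t=1..T. a m * (G m t \<bullet> (Y (t + \<tau> m) - V))) = (\<Sum>s\<in>I. e s)" ..
    have pw: "e s \<le> a m * ((if \<tau> m < s then G m (s - \<tau> m) else 0) \<bullet> (Y s - V)) + (if T + \<tau> m < s then a m * L m * B else 0)"
      if s: "s \<in> I" for s
    proof -
      have s1: "1 \<le> s" using s by (simp add: I_def)
      show ?thesis
      proof (cases "\<tau> m < s \<and> s \<le> T + \<tau> m")
        case True then show ?thesis by (simp add: e_def)
      next
        case False
        show ?thesis
        proof (cases "T + \<tau> m < s")
          case True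
          have g1: "1 \<le> s - \<tau> m" using True by simp
          have "- (G m (s - \<tau> m) \<bullet> (Y s - V)) \<le> norm (G m (s - \<tau> m)) * norm (Y s - V)"
            using norm_cauchy_schwarz[of "- G m (s - \<tau> m)" "Y s - V"] by simp
          also have "\<dots> \<le> L m * B"
            using Gb[OF m g1] YB[OF s1] Lpos[OF m] by (intro mult_mono) auto
          finally have "- (a m * (G m (s - \<tau> m) \<bullet> (Y s - V))) \<le> a m * (L m * B)"
            using a01[OF m] mult_left_mono[of "- (G m (s - \<tau> m) \<bullet> (Y s - V))" "L m * B" "a m"] by simp
          then show ?thesis using True False by (simp add: e_def mult.assoc)
        next
          case False2: False
          then show ?thesis using False by (auto simp: e_def)
        qed
      qed
    qed
    have "(\<Sum>s\<in>I. e s) \<le> (\<Sum>s\<in>I. a m * ((if \<tau> m < s then G m (s - \<tau> m) else 0) \<bullet> (Y s - V)))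
        + (\<Sum>s\<in>I. if T + \<tau> m < s then a m * L m * B else 0)"
      using pw by (simp add: sum.distrib[symmetric] sum_mono)
    also have "(\<Sum>s\<in>I. if T + \<tau> m < s then a m * L m * B else 0) = real (card {s \<in> I. T + \<tau> m < s}) * (a m * L m * B)"
      by (simp add: sum.inter_filter[OF fin, symmetric])
    also have "{s \<in> I. T + \<tau> m < s} = {T + \<tau> m + 1 .. T + tmx}"
      using tmn_le[OF m] by (auto simp: I_def)
    also have "real (card {T + \<tau> m + 1 .. T + tmx}) * (a m * L m * B) \<le> D * (a m * L m * B)"
    proof (rule mult_right_mono)
      show "real (card {T + \<tau> m + 1 .. T + tmx}) \<le> D"
        using tmn_le[OF m] tmx_ge[OF m] by (simp add: D_def)
      show "0 \<le> a m * L m * B" using aL0[OF m] B0 by simp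
    qed
    finally show ?thesis using eq1 by simp
  qed
  have sq_rest: "a m * L m * B \<le> (K * L m + B\<^sup>2) / 2" if m: "m \<in> W" for m
  proof -
    have "(a m * L m) * (a m * L m) \<le> K * L m"
      using aL_K[OF m] aL0[OF m] a01[OF m] Lpos[OF m] K0
      by (intro mult_mono) (auto simp: mult_left_le_one_le)
    moreover have "0 \<le> (a m * L m - B)\<^sup>2" by simp
    ultimately show ?thesis by (simp add: power2_diff power2_eq_square algebra_simps)
  qed
  define S1 where "S1 = (\<Sum>s\<in>I. d s \<bullet> (Y s - V))"
  define H where "H = (\<Sum>t\<in>I. ((norm (Y t - V))\<^sup>2 - (norm (Y (t + 1) - V))\<^sup>2) / (2 * \<eta> t))"
  have S1b: "S1 \<le> H + K * SL / 2 * SE"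
  proof -
    have "S1 \<le> (\<Sum>s\<in>I. ((norm (Y s - V))\<^sup>2 - (norm (Y (s + 1) - V))\<^sup>2) / (2 * \<eta> s) + \<eta> s * (K * SL) / 2)"
      unfolding S1_def by (intro sum_mono F3) (simp add: I_def)
    also have "\<dots> = H + K * SL / 2 * SE"
      by (simp add: H_def SE_def sum.distrib sum_distrib_left sum_divide_distrib[symmetric] algebra_simps)
    finally show ?thesis .
  qed
  have S1eq: "(\<Sum>m\<in>W. \<Sum>s\<in>I. a m * ((if \<tau> m < s then G m (s - \<tau> m) else 0) \<bullet> (Y s - V))) = S1"
    unfolding S1_def d_def
    by (subst sum.swap) (simp add: inner_sum_left)
  have "(\<Sum>t=1..T. \<Sum>m\<in>W. a m * (G m t \<bullet> (Y t - V)))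
      = (\<Sum>m\<in>W. (\<Sum>t=1..T. a m * (G m t \<bullet> (Y (t + \<tau> m) - V))) + (\<Sum>t=1..T. a m * (G m t \<bullet> (Y t - Y (t + \<tau> m)))))"
    by (subst sum.swap) (simp add: sum.distrib[symmetric] inner_diff_right algebra_simps)
  also have "\<dots> \<le> (\<Sum>m\<in>W. ((\<Sum>s\<in>I. a m * ((if \<tau> m < s then G m (s - \<tau> m) else 0) \<bullet> (Y s - V))) + D * (a m * L m * B))
        + real (card W) * K\<^sup>2 * real (\<tau> m) * SE)"
    by (intro sum_mono add_mono P1 P2)
  also have "\<dots> = S1 + D * (\<Sum>m\<in>W. a m * L m * B) + real (card W) * K\<^sup>2 * (\<Sum>m\<in>W. real (\<tau> m)) * SE"
    by (simp add: sum.distrib S1eq sum_distrib_left sum_distrib_right)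
  also have "\<dots> \<le> (H + K * SL / 2 * SE) + D * ((K * SL + real (card W) * B\<^sup>2) / 2) + real (card W) * K\<^sup>2 * (\<Sum>m\<in>W. real (\<tau> m)) * SE"
  proof -
    have "(\<Sum>m\<in>W. a m * L m * B) \<le> (\<Sum>m\<in>W. (K * L m + B\<^sup>2) / 2)"
      by (intro sum_mono sq_rest)
    also have "\<dots> = (K * SL + real (card W) * B\<^sup>2) / 2"
      by (simp add: SL_def sum.distrib sum_distrib_left sum_divide_distrib[symmetric])
    finally have "(\<Sum>m\<in>W. a m * L m * B) \<le> (K * SL + real (card W) * B\<^sup>2) / 2" .
    moreover have "0 \<le> D" unfolding D_def using W tmn_le tmx_ge by fastforce
    ultimately show ?thesis using S1b by (smt (verit) mult_left_mono)
  qed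
  also have "\<dots> = (K / 2 * SL + real (card W) * K\<^sup>2 * (\<Sum>m\<in>W. real (\<tau> m))) * SE + H + D / 2 * (K * SL + real (card W) * B\<^sup>2)"
    by (simp add: algebra_simps)
  finally show ?thesis unfolding SE_def H_def D_def SL_def I_def .
qed

theorem theorem3:
  fixes E :: "'ag::finite \<Rightarrow> 'ag \<Rightarrow> bool"
    and w :: "'ag \<Rightarrow> 'ag \<Rightarrow> real"
    and \<X> :: "(real^'c^'r) set"
    and B :: real
    and f :: "'ag \<Rightarrow> nat \<Rightarrow> real^'c^'r \<Rightarrow> real"
    and grad :: "'ag \<Rightarrow> nat \<Rightarrow> real^'c^'r \<Rightarrow> real^'c^'r"
    and L :: "'ag \<Rightarrow> real"
    and \<tau>t \<tau> :: "'ag \<Rightarrow> 'ag \<Rightarrow> nat"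
    and \<eta> :: "'ag \<Rightarrow> nat \<Rightarrow> real"
    and X :: "'ag \<Rightarrow> nat \<Rightarrow> real^'c^'r"
    and U :: "'ag \<Rightarrow> real^'c^'r"
    and T :: nat
  assumes E_sym: "\<And>a b. E a b \<Longrightarrow> E b a"
    and E_irrefl: "\<And>a. \<not> E a a"
    and E_conn: "\<And>a b. \<exists>p. is_path E p \<and> hd p = a \<and> last p = b"
    and X_closed: "closed \<X>" and X_convex: "convex \<X>" and X_bounded: "bounded \<X>"
    and X_ne: "\<X> \<noteq> {}"
    and B_def: "B = diameter \<X>"
    and f_convex: "\<And>m t. convex_on \<X> (f m t)"
    and f_grad: "\<And>m t Y. Y \<in> \<X> \<Longrightarrow> (f m t has_derivative (\<lambda>h. grad m t Y \<bullet> h)) (at Y)"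
    and L_pos: "\<And>m. L m > 0"
    and grad_bound: "\<And>m t Y. Y \<in> \<X> \<Longrightarrow> norm (grad m t Y) \<le> L m"
    and w_range: "\<And>n m. 0 \<le> w n m \<and> w n m \<le> 1"
    and w_stoch: "\<And>n. (\<Sum>m\<in>UNIV. w n m) = 1"
    and tree_paths: "\<And>n m. m \<in> Wset w n \<Longrightarrow>
          \<exists>p. is_path E p \<and> distinct p \<and> hd p = n \<and> last p = m \<and> length p = \<tau>t n m + 1"
    and \<tau>t_self: "\<And>n. \<tau>t n n = 0"
    and \<tau>_def: "\<And>n m. \<tau> n m = 2 * \<tau>t n m"
    and eta_pos: "\<And>n t. 1 \<le> t \<Longrightarrow> \<eta> n t > 0"
    and eta_noninc: "\<And>n t s. 1 \<le> t \<Longrightarrow> t \<le> s \<Longrightarrow> \<eta> n s \<le> \<eta> n t"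
    and X_init: "\<And>n. X n 1 \<in> \<X>"
    and X_step: "\<And>n t. 1 \<le> t \<Longrightarrow>
          X n (t + 1) = closest_point \<X> (X n t - \<eta> n t *\<^sub>R dam_dir w \<tau> grad X n t)"
    and U_mem: "\<And>n. U n \<in> \<X>"
    and U_min: "\<And>n V. V \<in> \<X> \<Longrightarrow>
          (\<Sum>t=1..T. \<Sum>m\<in>Wset w n. w n m * f m t (U n)) \<le> (\<Sum>t=1..T. \<Sum>m\<in>Wset w n. w n m * f m t V)"
    and T_pos: "1 \<le> T"
  shows "regret w f X U T \<le>
    (\<Sum>n\<in>UNIV.
        Qc w L \<tau> n * (\<Sum>t = tmin w \<tau> n + 1 .. T + tmax w \<tau> n. \<eta> n t)
      + Pc w L \<tau> n * \<eta> n (tmin w \<tau> n + 1)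
      + Hc w \<tau> \<eta> X U T n
      + Cc w L \<tau> B n)"
proof -
  have Xne: "\<X> \<noteq> {}" by (rule X_ne)
  have Xin: "X n t \<in> \<X>" if "1 \<le> t" for n t
    using that
  proof (induction t rule: dec_induct)
    case base then show ?case using X_init by simp
  next
    case (step t)
    then show ?case using X_step[of t n] closest_point_in_set[OF X_closed Xne] by simp
  qed
  have per: "(\<Sum>t=1..T. \<Sum>m\<in>Wset w n. w n m * f m t (X n t)) - (\<Sum>t=1..T. \<Sum>m\<in>Wset w n. w n m * f m t (U n))
      \<le> Qc w L \<tau> n * (\<Sum>t = tmin w \<tau> n + 1 .. T + tmax w \<tau> n. \<eta> n t)
      + Pc w L \<tau> n * \<eta> n (tmin w \<tau> n + 1) + Hc w \<tau> \<eta> X U T n + Cc w L \<tau> B n" for n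
  proof -
    define W where "W = Wset w n"
    have finW: "finite W" by simp
    have asum: "(\<Sum>m\<in>W. w n m) = 1"
    proof -
      have "(\<Sum>m\<in>W. w n m) = (\<Sum>m\<in>UNIV. w n m)"
        by (rule sum.mono_neutral_left) (use w_range in \<open>auto simp: W_def Wset_def order.order_iff_strict\<close>)
      then show ?thesis using w_stoch by simp
    qed
    have Wne: "W \<noteq> {}" using asum by auto
    have reg: "(\<Sum>t=1..T. \<Sum>m\<in>W. w n m * f m t (X n t)) - (\<Sum>t=1..T. \<Sum>m\<in>W. w n m * f m t (U n))
        \<le> (\<Sum>t=1..T. \<Sum>m\<in>W. w n m * (grad m t (X n t) \<bullet> (X n t - U n)))"
    proof -
      have "(\<Sum>t=1..T. \<Sum>m\<in>W. w n m * f m t (X n t)) - (\<Sum>t=1..T. \<Sum>m\<in>W. w n m * f m t (U n))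
          = (\<Sum>t=1..T. \<Sum>m\<in>W. w n m * (f m t (X n t) - f m t (U n)))"
        by (simp add: sum_subtractf[symmetric] right_diff_distrib)
      also have "\<dots> \<le> (\<Sum>t=1..T. \<Sum>m\<in>W. w n m * (grad m t (X n t) \<bullet> (X n t - U n)))"
      proof (intro sum_mono mult_left_mono)
        fix t m assume t: "t \<in> {1..T}" and m: "m \<in> W"
        have xt: "X n t \<in> \<X>" using t Xin by simp
        show "f m t (X n t) - f m t (U n) \<le> grad m t (X n t) \<bullet> (X n t - U n)"
          using grad_ineq[OF f_convex xt U_mem f_grad[OF xt]] .
        show "0 \<le> w n m" using w_range by simp
      qed
      finally show ?thesis .
    qed
    have main: "(\<Sum>t=1..T. \<Sum>m\<in>W. w n m * (grad m t (X n t) \<bullet> (X n t - U n))) \<le>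
     (Kc w L n / 2 * (\<Sum>m\<in>W. L m) + real (card W) * (Kc w L n)\<^sup>2 * (\<Sum>m\<in>W. real (\<tau> n m))) * (\<Sum>t = tmin w \<tau> n + 1 .. T + tmax w \<tau> n. \<eta> n t)
     + (\<Sum>t = tmin w \<tau> n + 1 .. T + tmax w \<tau> n. ((norm (X n t - U n))\<^sup>2 - (norm (X n (t + 1) - U n))\<^sup>2) / (2 * \<eta> n t))
     + (real (tmax w \<tau> n) - real (tmin w \<tau> n)) / 2 * (Kc w L n * (\<Sum>m\<in>W. L m) + real (card W) * B\<^sup>2)"
    proof (rule agent_bound[where d = "dam_dir w \<tau> grad X n" and G = "\<lambda>m t. grad m t (X n t)"])
      show "finite W" "W \<noteq> {}" by (fact finW, fact Wne)
      show "\<And>m. m \<in> W \<Longrightarrow> 0 \<le> w n m \<and> w n m \<le> 1" using w_range by simp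
      show "(\<Sum>m\<in>W. w n m) = 1" by (fact asum)
      show "Kc w L n = Max ((\<lambda>m. w n m * L m) ` W)" by (simp add: Kc_def W_def)
      show "tmin w \<tau> n = Min (\<tau> n ` W)" by (simp add: tmin_def W_def)
      show "tmax w \<tau> n = Max (\<tau> n ` W)" by (simp add: tmax_def W_def)
      show "\<And>m. m \<in> W \<Longrightarrow> 0 \<le> L m" using L_pos less_imp_le by blast
      show "\<And>m t. m \<in> W \<Longrightarrow> 1 \<le> t \<Longrightarrow> norm (grad m t (X n t)) \<le> L m"
        using grad_bound Xin by blast
      show "\<And>s. dam_dir w \<tau> grad X n s = (\<Sum>m\<in>W. w n m *\<^sub>R (if \<tau> n m < s then grad m (s - \<tau> n m) (X n (s - \<tau> n m)) else 0))"
        by (simp add: dam_dir_def W_def)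
      show "\<And>t. 1 \<le> t \<Longrightarrow> norm (X n t - U n) \<le> B"
        using diameter_bounded_bound[OF X_bounded Xin U_mem] by (simp add: B_def dist_norm)
      show "\<And>t. 1 \<le> t \<Longrightarrow> norm (X n (t + 1) - U n) \<le> norm (X n t - \<eta> n t *\<^sub>R dam_dir w \<tau> grad X n t - U n)"
        using closest_point_lipschitz[OF X_convex X_closed Xne] closest_point_self[OF U_mem]
        by (metis X_step dist_norm)
      show "\<And>t. 1 \<le> t \<Longrightarrow> norm (X n (t + 1) - X n t) \<le> \<eta> n t * norm (dam_dir w \<tau> grad X n t)"
      proof -
        fix t :: nat assume t1: "1 \<le> t"
        have "norm (X n (t + 1) - X n t) \<le> norm ((X n t - \<eta> n t *\<^sub>R dam_dir w \<tau> grad X n t) - X n t)"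
          using closest_point_lipschitz[OF X_convex X_closed Xne] closest_point_self[OF Xin[OF t1]]
          by (metis X_step[OF t1] dist_norm)
        also have "\<dots> = \<eta> n t * norm (dam_dir w \<tau> grad X n t)"
          using eta_pos[OF t1, of n] by simp
        finally show "norm (X n (t + 1) - X n t) \<le> \<eta> n t * norm (dam_dir w \<tau> grad X n t)" .
      qed
      show "\<And>t. 1 \<le> t \<Longrightarrow> 0 < \<eta> n t" using eta_pos by blast
    qed
    have P0: "0 \<le> Pc w L \<tau> n * \<eta> n (tmin w \<tau> n + 1)"
      using eta_pos[of "tmin w \<tau> n + 1" n] by (simp add: Pc_def)
    show ?thesis
      using reg main P0 unfolding Qc_def Hc_def Cc_def W_def by linarith
  qed
  show ?thesis unfolding regret_def by (intro sum_mono per)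
qed

end
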